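(* Let $1\le k\le n$, $h=\mathcal D_K(x^{\epsilon_k+\epsilon_{-k}})$, $e=\mathcal D_K(x^{2\epsilon_k+\epsilon_{-k}})$, $d^{(\ell)}=\frac1{\ell!}(\mathrm{ad}\,e)^\ell$. For $a\in\mathbb F$ put $F_a=\sum_{r\ge0}\frac1{r!}h_a^{\langle r\rangle}\otimes e^rt^r\in (U(\mathbf K)\otimes U(\mathbf K))[[t]]$ and $u_a=\sum_{r\ge0}\frac{(-1)^r}{r!}h_{-a}^{[r]}e^rt^r\in U(\mathbf K)[[t]]$. Then for every $\alpha\in\mathbb Z^{2n+1}$, $a\in\mathbb F$ and integer $s\ge1$: $$\big(\mathcal D_K(x^\alpha)^s\otimes1\big)F_a=F_{a+s(\alpha_{-k}-\alpha_k)}\big(\mathcal D_K(x^\alpha)^s\otimes1\big),$$ $$\mathcal D_K(x^\alpha)^s\,u_a=u_{a+s(\alpha_k-\alpha_{-k})}\sum_{\ell\ge0}d^{(\ell)}\big(\mathcal D_K(x^\alpha)^s\big)\,h_{1-a}^{\langle\ell\rangle}t^\ell,$$ $$\big(1\otimes\mathcal D_K(x^\alpha)^s\big)F_a=\sum_{\ell\ge0}(-1)^\ell F_{a+\ell}\big(h_a^{\langle\ell\rangle}\otimes d^{(\ell)}(\mathcal D_K(x^\alpha)^s)\big)t^\ell.$$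
   Context: Let $\mathbb F$ be a field of characteristic $0$ and $n\ge1$. Coordinates are indexed by $\{-n,\dots,-1,0,1,\dots,n\}$; $\epsilon_i\in\mathbb Z^{2n+1}$ is the $i$-th unit vector and, for $\alpha\in\mathbb Z^{2n+1}$, $x^\alpha=\prod_i x_i^{\alpha_i}$ in $\mathbb F[x_{-n}^{\pm1},\dots,x_n^{\pm1}]$. Define the derivation $\mathcal D_K(x^\alpha)=\big(2-\sum_{i=1}^n(\alpha_i+\alpha_{-i})\big)x^\alpha\frac{\partial}{\partial x_0}+\sum_{i=1}^n\Big[(\alpha_0x^{\alpha+\epsilon_i-\epsilon_0}+\alpha_{-i}x^{\alpha-\epsilon_{-i}})\frac{\partial}{\partial x_i}+(\alpha_0x^{\alpha+\epsilon_{-i}-\epsilon_0}-\alpha_ix^{\alpha-\epsilon_i})\frac{\partial}{\partial x_{-i}}\Big]$, extended linearly. The generalized Cartan type $K$ Lie algebra $\mathbf K$ is the Lie algebra of derivations (commutator bracket) with basis $\{\mathcal D_K(x^\alpha):\alpha\in\mathbb Z^{2n+1}\}$; explicitly $[\mathcal D_K(x^\alpha),\mathcal D_K(x^\beta)]=\mathcal D_K\Big(\big((2-\sum_{i=1}^n(\alpha_i+\alpha_{-i}))\beta_0-(2-\sum_{i=1}^n(\beta_i+\beta_{-i}))\alpha_0\big)x^{\alpha+\beta-\epsilon_0}+\sum_{i=1}^n(\alpha_{-i}\beta_i-\alpha_i\beta_{-i})x^{\alpha+\beta-\epsilon_i-\epsilon_{-i}}\Big)$. For an element $x$ of a unital algebra,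 a scalar $a$ and $m\ge0$: $x_a^{\langle m\rangle}=(x+a)(x+a+1)\cdots(x+a+m-1)$, $x_a^{[m]}=(x+a)(x+a-1)\cdots(x+a-m+1)$, $x^{\langle m\rangle}=x_0^{\langle m\rangle}$ (empty products $=1$). $\mathrm{ad}\,e(y)=ey-ye$. *)

theory Defs
  imports "HOL-Computational_Algebra.Formal_Power_Series"
begin

(* Multi-indices alpha in Z^{2n+1}, coordinates -n..n, represented as int => int
   vanishing outside [-n,n]. *)
definition Zvec :: "nat \<Rightarrow> (int \<Rightarrow> int) set" where
  "Zvec n = {\<alpha>. \<forall>j. (j < - int n \<or> int n < j) \<longrightarrow> \<alpha> j = 0}"

definition eps :: "int \<Rightarrow> int \<Rightarrow> int" where
  "eps i = (\<lambda>j. if j = i then 1 else 0)"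

definition wK :: "nat \<Rightarrow> (int \<Rightarrow> int) \<Rightarrow> int" where
  "wK n \<alpha> = 2 - (\<Sum>i=1..n. \<alpha> (int i) + \<alpha> (- int i))"

(* sc makes the unital ring 'a an associative unital F-algebra (sc central unital ring hom) *)
definition central_alg_hom :: "('f::field_char_0 \<Rightarrow> 'a::ring_1) \<Rightarrow> bool" where
  "central_alg_hom sc \<longleftrightarrow>
     sc 1 = 1 \<and> (\<forall>x y. sc (x + y) = sc x + sc y) \<and> (\<forall>x y. sc (x * y) = sc x * sc y)
     \<and> (\<forall>x u. sc x * u = u * sc x)"

(* rho gives the images of the basis elements D_K(x^alpha) under a Lie algebra
   homomorphism K -> (A, commutator); the linear extension is a Lie hom iff the
   images satisfy the bracket relations on basis elements. *)
definition K_rep :: "nat \<Rightarrow> ('f::field_char_0 \<Rightarrow> 'a::ring_1) \<Rightarrow> ((int \<Rightarrow> int) \<Rightarrow> 'a) \<Rightarrow> bool" where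
  "K_rep n sc \<rho> \<longleftrightarrow>
    (\<forall>\<alpha>\<in>Zvec n. \<forall>\<beta>\<in>Zvec n.
       \<rho> \<alpha> * \<rho> \<beta> - \<rho> \<beta> * \<rho> \<alpha> =
         sc (of_int (wK n \<alpha> * \<beta> 0 - wK n \<beta> * \<alpha> 0)) * \<rho> (\<lambda>j. \<alpha> j + \<beta> j - eps 0 j)
       + (\<Sum>i=1..n. sc (of_int (\<alpha> (- int i) * \<beta> (int i) - \<alpha> (int i) * \<beta> (- int i)))
                      * \<rho> (\<lambda>j. \<alpha> j + \<beta> j - eps (int i) j - eps (- int i) j)))"

fun rising :: "('f::field_char_0 \<Rightarrow> 'a::ring_1) \<Rightarrow> 'a \<Rightarrow> 'f \<Rightarrow> nat \<Rightarrow> 'a" where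
  "rising sc x a 0 = 1"
| "rising sc x a (Suc m) = rising sc x a m * (x + sc a + of_nat m)"

fun falling :: "('f::field_char_0 \<Rightarrow> 'a::ring_1) \<Rightarrow> 'a \<Rightarrow> 'f \<Rightarrow> nat \<Rightarrow> 'a" where
  "falling sc x a 0 = 1"
| "falling sc x a (Suc m) = falling sc x a m * (x + sc a - of_nat m)"

definition dpow :: "('f::field_char_0 \<Rightarrow> 'a::ring_1) \<Rightarrow> 'a \<Rightarrow> nat \<Rightarrow> 'a \<Rightarrow> 'a" where
  "dpow sc e l y = sc (1 / fact l) * (((\<lambda>z. e * z - z * e) ^^ l) y)"

(* F_a = sum_r (1/r!) h_a^<r> (x) e^r t^r, with h(x)1 -> H, 1(x)e -> E *)
definition Fser :: "('f::field_char_0 \<Rightarrow> 'a::ring_1) \<Rightarrow> 'a \<Rightarrow> 'a \<Rightarrow> 'f \<Rightarrow> 'a fps" where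
  "Fser sc H E a = Abs_fps (\<lambda>r. sc (1 / fact r) * rising sc H a r * E ^ r)"

definition user :: "('f::field_char_0 \<Rightarrow> 'a::ring_1) \<Rightarrow> 'a \<Rightarrow> 'a \<Rightarrow> 'f \<Rightarrow> 'a fps" where
  "user sc H E a = Abs_fps (\<lambda>r. sc ((-1) ^ r / fact r) * falling sc H (- a) r * E ^ r)"

(* the t-adically convergent sum  sum_{l>=0} G_l t^l  of power series G_l *)
definition tsum :: "(nat \<Rightarrow> 'a::ring_1 fps) \<Rightarrow> 'a fps" where
  "tsum G = Abs_fps (\<lambda>m. \<Sum>l\<le>m. fps_nth (G l) (m - l))"

end

theory Submission
  imports Defs
begin



context fixes sc :: "'f::field_char_0 \<Rightarrow> 'a::ring_1" assumes sc: "central_alg_hom sc"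
begin

lemma sc_add: "sc (x + y) = sc x + sc y" using sc unfolding central_alg_hom_def by blast
lemma sc_mult: "sc (x * y) = sc x * sc y" using sc unfolding central_alg_hom_def by blast
lemma sc_one: "sc 1 = 1" using sc unfolding central_alg_hom_def by blast
lemma sc_comm: "sc x * u = u * sc x" using sc unfolding central_alg_hom_def by blast
lemma sc_zero: "sc 0 = 0" using sc_add[of 0 0] by simp
lemma sc_uminus: "sc (- x) = - sc x" using sc_add[of x "-x"] sc_zero by (simp add: add.commute eq_neg_iff_add_eq_0)
lemma sc_diff: "sc (x - y) = sc x - sc y" using sc_add[of x "-y"] sc_uminus by simp
lemma sc_of_nat: "sc (of_nat m) = of_nat m" by (induction m) (simp_all add: sc_zero sc_add sc_one)
lemma sc_of_int: "sc (of_int m) = of_int m"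
proof -
  have "m = int (nat m) \<or> m = - int (nat (-m))" by arith
  then show ?thesis
    by (metis of_int_minus of_int_of_nat_eq sc_of_nat sc_uminus)
qed
lemma sc_power: "sc (x ^ m) = sc x ^ m" by (induction m) (simp_all add: sc_one sc_mult)

lemma move_sc: "A * (sc x * B) = sc x * (A * B)"
  by (simp only: mult.assoc[symmetric] sc_comm[of x A])

lemma rising_comm: "y * H = H * y \<Longrightarrow> y * rising sc H a l = rising sc H a l * y"
proof (induction l)
  case (Suc l)
  have "y * rising sc H a (Suc l) = rising sc H a l * (y * (H + sc a + of_nat l))"
    using Suc by (simp add: mult.assoc[symmetric])
  also have "y * (H + sc a + of_nat l) = (H + sc a + of_nat l) * y"
    using Suc.prems by (simp add: distrib_left distrib_right sc_comm mult_of_nat_commute)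
  finally show ?case by (simp add: mult.assoc)
qed simp

lemma falling_comm: "y * H = H * y \<Longrightarrow> y * falling sc H a l = falling sc H a l * y"
proof (induction l)
  case (Suc l)
  have "y * falling sc H a (Suc l) = falling sc H a l * (y * (H + sc a - of_nat l))"
    using Suc by (simp add: mult.assoc[symmetric])
  also have "y * (H + sc a - of_nat l) = (H + sc a - of_nat l) * y"
    using Suc.prems by (simp add: distrib_left distrib_right left_diff_distrib right_diff_distrib sc_comm mult_of_nat_commute)
  finally show ?case by (simp add: mult.assoc)
qed simp

lemma rising_shift: assumes "X * H = (H - sc \<mu>) * X"
  shows "X * rising sc H a r = rising sc H (a - \<mu>) r * X"
proof (induction r)
  case (Suc r)
  have "X * rising sc H a (Suc r) = rising sc H (a - \<mu>) r * (X * (H + sc a + of_nat r))"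
    using Suc by (simp add: mult.assoc[symmetric])
  also have "X * (H + sc a + of_nat r) = (H + sc (a - \<mu>) + of_nat r) * X"
    using assms by (simp add: distrib_left distrib_right left_diff_distrib sc_diff sc_comm mult_of_nat_commute)
  finally show ?case by (simp add: mult.assoc)
qed simp

lemma falling_shift: assumes "X * H = (H - sc \<mu>) * X"
  shows "X * falling sc H a r = falling sc H (a - \<mu>) r * X"
proof (induction r)
  case (Suc r)
  have "X * falling sc H a (Suc r) = falling sc H (a - \<mu>) r * (X * (H + sc a - of_nat r))"
    using Suc by (simp add: mult.assoc[symmetric])
  also have "X * (H + sc a - of_nat r) = (H + sc (a - \<mu>) - of_nat r) * X"
    using assms by (simp add: distrib_left distrib_right left_diff_distrib right_diff_distrib sc_diff sc_comm mult_of_nat_commute)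
  finally show ?case by (simp add: mult.assoc)
qed simp

lemma rising_add: "rising sc H a (l + j) = rising sc H a l * rising sc H (a + of_nat l) j"
  by (induction j) (simp_all add: sc_add sc_of_nat mult.assoc add.assoc)

lemma rising_Suc_left: "rising sc H c (Suc j) = (H + sc c) * rising sc H (c + 1) j"
proof (induction j)
  case 0 then show ?case by simp
next
  case (Suc j)
  have "rising sc H c (Suc (Suc j)) = (H + sc c) * rising sc H (c + 1) j * (H + sc c + of_nat (Suc j))"
    using Suc by (simp only: rising.simps)
  also have "H + sc c + of_nat (Suc j) = H + sc (c + 1) + of_nat j"
    by (simp add: sc_add sc_one)
  finally show ?case by (simp only: rising.simps mult.assoc)
qed

lemma falling_split: "falling sc H b (k + j) = falling sc H b k * rising sc H (b - of_nat (k + j) + 1) j"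
proof (induction j)
  case (Suc j)
  have c: "rising sc H (b - of_nat (k + j) + 1) j * (H + sc (b - of_nat (k+j)))
     = (H + sc (b - of_nat (k+j))) * rising sc H (b - of_nat (k + j) + 1) j"
    by (rule rising_comm[symmetric]) (simp add: distrib_left distrib_right sc_comm)
  have "falling sc H b (k + Suc j) = falling sc H b k * (rising sc H (b - of_nat (k + j) + 1) j * (H + sc (b - of_nat (k+j))))"
  proof -
    have e1: "falling sc H b (k + Suc j) = falling sc H b (k+j) * (H + sc b - of_nat (k+j))"
      by (simp only: add_Suc_right falling.simps)
    have e2: "H + sc (b - of_nat (k+j)) = H + sc b - of_nat (k+j)"
      by (simp only: sc_diff sc_of_nat add_diff_eq)
    show ?thesis by (simp only: e1 e2 Suc.IH mult.assoc)
  qed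
  also have "\<dots> = falling sc H b k * rising sc H (b - of_nat (k + Suc j) + 1) (Suc j)"
    unfolding c rising_Suc_left by (simp add: algebra_simps)
  finally show ?case .
qed simp

end



lemma oi_move: "(x::'a::ring_1) * R * (of_int c * Z) = (x * of_int c) * R * Z"
proof -
  have "R * (of_int c * Z) = of_int c * (R * Z)"
    by (metis mult.assoc mult_of_int_commute)
  then show ?thesis by (simp only: mult.assoc)
qed

lemma ad_Suc: "((\<lambda>z. E * z - z * E) ^^ Suc j) X = E * ((\<lambda>z. E * z - z * E) ^^ j) X - ((\<lambda>z. E * z - z * E) ^^ j) X * E"
  by simp

lemma X_Epow:
  fixes E X :: "'a::ring_1"
  defines "Y \<equiv> \<lambda>j. ((\<lambda>z. E * z - z * E) ^^ j) X"
  shows "X * E ^ m = (\<Sum>j\<le>m. of_int ((-1)^j * int (m choose j)) * (E ^ (m - j) * Y j))"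
proof (induction m)
  case 0 then show ?case by (simp add: Y_def)
next
  case (Suc m)
  define c where "c = (\<lambda>m j. of_int ((-1)^j * int (m choose j)) :: 'a)"
  have YS: "Y j * E = E * Y j - Y (Suc j)" for j by (simp add: Y_def)
  have "X * E ^ Suc m = (X * E ^ m) * E" by (simp add: power_commutes mult.assoc)
  also have "\<dots> = (\<Sum>j\<le>m. c m j * (E ^ (m - j) * (Y j * E)))"
    unfolding Suc c_def by (simp add: sum_distrib_right mult.assoc)
  also have "\<dots> = (\<Sum>j\<le>m. c m j * (E ^ (Suc m - j) * Y j)) - (\<Sum>j\<le>m. c m j * (E ^ (m - j) * Y (Suc j)))"
  proof -
    have "c m j * (E ^ (m - j) * (Y j * E)) = c m j * (E ^ (Suc m - j) * Y j) - c m j * (E ^ (m - j) * Y (Suc j))"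
      if "j \<le> m" for j
    proof -
      have "E ^ (Suc m - j) = E ^ (m - j) * E" using that by (simp add: Suc_diff_le power_commutes)
      then show ?thesis unfolding YS by (simp add: algebra_simps)
    qed
    then show ?thesis by (simp add: sum_subtractf)
  qed
  also have "(\<Sum>j\<le>m. c m j * (E ^ (Suc m - j) * Y j)) = (\<Sum>j\<le>Suc m. c m j * (E ^ (Suc m - j) * Y j))"
    by (simp add: c_def binomial_eq_0)
  also have "\<dots> = c m 0 * (E ^ Suc m * Y 0) + (\<Sum>i\<le>m. c m (Suc i) * (E ^ (m - i) * Y (Suc i)))"
    by (subst sum.atMost_Suc_shift) simp
  also have "c m 0 * (E ^ Suc m * Y 0) + (\<Sum>i\<le>m. c m (Suc i) * (E ^ (m - i) * Y (Suc i)))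
      - (\<Sum>j\<le>m. c m j * (E ^ (m - j) * Y (Suc j)))
     = c (Suc m) 0 * (E ^ Suc m * Y 0) + (\<Sum>i\<le>m. c (Suc m) (Suc i) * (E ^ (m - i) * Y (Suc i)))"
  proof -
    have "c (Suc m) (Suc i) = c m (Suc i) - c m i" for i by (simp add: c_def algebra_simps)
    then show ?thesis by (simp add: c_def left_diff_distrib sum_subtractf)
  qed
  also have "\<dots> = (\<Sum>j\<le>Suc m. c (Suc m) j * (E ^ (Suc m - j) * Y j))"
    by (subst sum.atMost_Suc_shift) simp
  finally show ?case by (simp add: c_def)
qed




context fixes sc :: "'f::field_char_0 \<Rightarrow> 'a::ring_1" assumes sc: "central_alg_hom sc"
begin

lemma part1:
  assumes XE: "X * E = E * X" and XH: "X * H = (H - sc \<mu>) * X"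
  shows "fps_const X * Fser sc H E a = Fser sc H E (a - \<mu>) * fps_const X"
proof (rule fps_ext)
  fix r
  have XEr: "X * E ^ r = E ^ r * X" using XE by (metis power_commuting_commutes)
  have "X * (sc (1 / fact r) * rising sc H a r * E ^ r) = sc (1 / fact r) * (X * rising sc H a r) * E ^ r"
    by (simp only: mult.assoc move_sc[OF sc, of _ "1 / fact r"])
  also have "\<dots> = sc (1 / fact r) * rising sc H (a - \<mu>) r * (X * E ^ r)"
    by (simp add: rising_shift[OF sc XH] mult.assoc)
  also have "\<dots> = sc (1 / fact r) * rising sc H (a - \<mu>) r * E ^ r * X"
    by (simp add: XEr mult.assoc)
  finally show "fps_nth (fps_const X * Fser sc H E a) r = fps_nth (Fser sc H E (a - \<mu>) * fps_const X) r"
    by (simp only: Fser_def fps_mult_left_const_nth fps_mult_right_const_nth fps_nth_Abs_fps mult.assoc)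
qed

lemma scal3: "j \<le> m \<Longrightarrow> (1 / fact m :: 'f) * of_int ((-1)^j * int (m choose j)) = (-1)^j * (1 / fact (m - j) * (1 / fact j))"
  by (simp add: binomial_fact field_simps)

lemma part3:
  assumes HE: "H * E = E * H" and XH: "X * H = H * X"
  shows "fps_const X * Fser sc H E a = tsum (\<lambda>l. fps_const ((-1)^l) * Fser sc H E (a + of_nat l) * fps_const (rising sc H a l * dpow sc E l X))"
proof (rule fps_ext)
  fix m
  define Y where "Y = (\<lambda>j. ((\<lambda>z. E * z - z * E) ^^ j) X)"
  define R where "R = rising sc H"
  have "X * (sc (1 / fact m) * R a m * E ^ m) = sc (1 / fact m) * R a m * (X * E ^ m)"
    by (simp only: R_def mult.assoc move_sc[OF sc, of _ "1 / fact m"]) (simp only: mult.assoc[symmetric] rising_comm[OF sc XH])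
  also have "\<dots> = (\<Sum>j\<le>m. (sc (1 / fact m) * of_int ((-1)^j * int (m choose j))) * R a m * (E ^ (m - j) * Y j))"
    unfolding X_Epow Y_def sum_distrib_left by (rule sum.cong[OF refl]) (rule oi_move)
  also have "\<dots> = (\<Sum>l\<le>m. (-1)^l * (sc (1 / fact (m - l)) * R (a + of_nat l) (m - l) * E ^ (m - l)) * (R a l * (sc (1 / fact l) * Y l)))"
  proof (rule sum.cong[OF refl])
    fix l assume l: "l \<in> {..m}"
    have s: "sc (1 / fact m) * of_int ((-1)^l * int (m choose l)) = (-1)^l * (sc (1 / fact (m - l)) * sc (1 / fact l))"
    proof -
      have "sc (1 / fact m) * of_int ((-1)^l * int (m choose l)) = sc (1 / fact m * of_int ((-1)^l * int (m choose l)))"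
        by (simp only: sc_mult[OF sc] sc_of_int[OF sc])
      also have "\<dots> = sc ((-1)^l * (1 / fact (m - l) * (1 / fact l)))"
        using scal3[of l m] l by simp
      also have "\<dots> = (-1)^l * (sc (1 / fact (m - l)) * sc (1 / fact l))"
        by (simp only: sc_mult[OF sc] sc_power[OF sc] sc_uminus[OF sc] sc_one[OF sc])
      finally show ?thesis .
    qed
    have Rm: "R a m = R a l * R (a + of_nat l) (m - l)"
      using rising_add[OF sc, of H a l "m - l"] l by (simp add: R_def)
    have HEp: "H * E ^ (m - l) = E ^ (m - l) * H" using HE by (metis power_commuting_commutes)
    have c1: "E ^ (m - l) * R a l = R a l * E ^ (m - l)"
      using rising_comm[OF sc HEp[symmetric]] by (simp add: R_def)
    have c2: "R (a + of_nat l) (m - l) * R a l = R a l * R (a + of_nat l) (m - l)"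
    proof -
      have Hc: "rising sc H a l * H = H * rising sc H a l" using rising_comm[OF sc, of H H a l] by simp
      show ?thesis unfolding R_def by (rule rising_comm[OF sc Hc, symmetric])
    qed
    have "(-1)^l * (sc (1 / fact (m - l)) * R (a + of_nat l) (m - l) * E ^ (m - l)) * (R a l * (sc (1 / fact l) * Y l))
      = (-1)^l * sc (1 / fact (m - l)) * sc (1 / fact l) * (R (a + of_nat l) (m - l) * (E ^ (m - l) * R a l)) * Y l"
      by (simp only: mult.assoc move_sc[OF sc, of _ "1 / fact l"])
    also have "\<dots> = (-1)^l * sc (1 / fact (m - l)) * sc (1 / fact l) * R a m * (E ^ (m - l) * Y l)"
      unfolding c1 mult.assoc[symmetric] c2 Rm by (simp add: mult.assoc)
    finally show "(sc (1 / fact m) * of_int ((-1)^l * int (m choose l))) * R a m * (E ^ (m - l) * Y l)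
       = (-1)^l * (sc (1 / fact (m - l)) * R (a + of_nat l) (m - l) * E ^ (m - l)) * (R a l * (sc (1 / fact l) * Y l))"
      unfolding s by (simp add: mult.assoc)
  qed
  finally have calc: "X * (sc (1 / fact m) * R a m * E ^ m) = (\<Sum>l\<le>m. (-1)^l * (sc (1 / fact (m - l)) * R (a + of_nat l) (m - l) * E ^ (m - l)) * (R a l * (sc (1 / fact l) * Y l)))" .
  have L: "fps_nth (fps_const X * Fser sc H E a) m = X * (sc (1 / fact m) * R a m * E ^ m)"
    by (simp add: Fser_def R_def)
  have Rr: "fps_nth (tsum (\<lambda>l. fps_const ((-1)^l) * Fser sc H E (a + of_nat l) * fps_const (rising sc H a l * dpow sc E l X))) m
     = (\<Sum>l\<le>m. (-1)^l * (sc (1 / fact (m - l)) * R (a + of_nat l) (m - l) * E ^ (m - l)) * (R a l * (sc (1 / fact l) * Y l)))"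
    unfolding tsum_def fps_nth_Abs_fps
    by (rule sum.cong[OF refl]) (simp only: Fser_def dpow_def R_def Y_def fps_mult_left_const_nth fps_mult_right_const_nth fps_nth_Abs_fps)
  show "fps_nth (fps_const X * Fser sc H E a) m = fps_nth (tsum (\<lambda>l. fps_const ((-1)^l) * Fser sc H E (a + of_nat l) * fps_const (rising sc H a l * dpow sc E l X))) m"
    by (simp only: L Rr calc)
qed

end



context fixes sc :: "'f::field_char_0 \<Rightarrow> 'a::ring_1" assumes sc: "central_alg_hom sc"
begin

lemma eig_prod:
  assumes "H*A - A*H = sc p * A" "H*B - B*H = sc q * B"
  shows "H*(A*B) - (A*B)*H = sc (p+q) * (A*B)"
proof -
  have "H*(A*B) - (A*B)*H = (H*A - A*H)*B + A*(H*B - B*H)" by (simp add: algebra_simps)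
  also have "\<dots> = sc p * A * B + A * (sc q * B)" using assms by simp
  also have "A * (sc q * B) = sc q * (A * B)" by (rule move_sc[OF sc])
  also have "sc p * A * B + sc q * (A * B) = sc (p+q) * (A*B)" by (simp add: sc_add[OF sc] algebra_simps)
  finally show ?thesis .
qed

lemma eig_Epow:
  assumes "H*E - E*H = E" shows "H*E^i - E^i*H = sc (of_nat i) * E^i"
proof (induction i)
  case 0 then show ?case by (simp add: sc_zero[OF sc])
next
  case (Suc i)
  have e: "H*E - E*H = sc 1 * E" using assms by (simp add: sc_one[OF sc])
  show ?case using eig_prod[OF e Suc] by (simp add: add.commute)
qed

lemma eig_ad:
  assumes e: "H*E - E*H = E" and x: "H*X - X*H = sc \<mu> * X"
  shows "H*((\<lambda>z. E * z - z * E) ^^ j) X - ((\<lambda>z. E * z - z * E) ^^ j) X*H = sc (\<mu> + of_nat j) * ((\<lambda>z. E * z - z * E) ^^ j) X"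
proof (induction j)
  case 0 then show ?case using x by simp
next
  case (Suc j)
  define Y where "Y = ((\<lambda>z. E * z - z * E) ^^ j) X"
  have e1: "H*E - E*H = sc 1 * E" using e by (simp add: sc_one[OF sc])
  have a: "H*(E*Y) - (E*Y)*H = sc (1 + (\<mu> + of_nat j)) * (E*Y)" using eig_prod[OF e1 Suc[folded Y_def]] .
  have b: "H*(Y*E) - (Y*E)*H = sc ((\<mu> + of_nat j) + 1) * (Y*E)" using eig_prod[OF Suc[folded Y_def] e1] .
  have "H*(E*Y - Y*E) - (E*Y - Y*E)*H = (H*(E*Y) - (E*Y)*H) - (H*(Y*E) - (Y*E)*H)" by (simp add: algebra_simps)
  also have "\<dots> = sc (\<mu> + of_nat (Suc j)) * (E*Y - Y*E)" unfolding a b by (simp add: algebra_simps)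
  finally show ?case by (simp add: Y_def)
qed

lemma eig_shift: "H*Z - Z*H = sc p * Z \<Longrightarrow> Z*H = (H - sc p)*Z"
  by (simp add: algebra_simps)

lemma scal2: "j \<le> m \<Longrightarrow> ((-1)^m / fact m :: 'f) * of_int ((-1)^j * int (m choose j)) = (-1)^(m-j) / fact (m - j) * (1 / fact j)"
proof -
  assume j: "j \<le> m"
  have p: "(-1::'f)^m * (-1)^j = (-1)^(m-j)"
  proof -
    have "(-1::'f)^m = (-1)^(m-j) * (-1)^j" using j by (simp add: power_add[symmetric])
    moreover have "(-1::'f)^j * (-1)^j = 1" by (simp flip: power_mult_distrib)
    ultimately show ?thesis by (simp add: mult.assoc)
  qed
  show ?thesis using j p by (simp add: binomial_fact field_simps)
qed

end



context fixes sc :: "'f::field_char_0 \<Rightarrow> 'a::ring_1" assumes sc: "central_alg_hom sc"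
begin

lemma part2:
  assumes HE: "H*E - E*H = E" and HX: "H*X - X*H = sc \<mu> * X"
  shows "fps_const X * user sc H E a = user sc H E (a + \<mu>) * Abs_fps (\<lambda>l. dpow sc E l X * rising sc H (1 - a) l)"
proof (rule fps_ext)
  fix m
  define Y where "Y = (\<lambda>j. ((\<lambda>z. E * z - z * E) ^^ j) X)"
  define R where "R = rising sc H"
  define F where "F = falling sc H"
  define b where "b = - (a + \<mu>)"
  have XH: "X * H = (H - sc \<mu>) * X" using eig_shift[OF sc HX] .
  have Fs: "X * F (-a) m = F b m * X"
    unfolding F_def b_def using falling_shift[OF sc XH, of "-a" m] by simp
  have "X * (sc ((-1)^m / fact m) * F (-a) m * E ^ m) = sc ((-1)^m / fact m) * F b m * (X * E ^ m)"
    by (simp only: mult.assoc move_sc[OF sc, of _ "(-1)^m / fact m"]) (simp only: Fs mult.assoc[symmetric])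
  also have "\<dots> = (\<Sum>j\<le>m. (sc ((-1)^m / fact m) * of_int ((-1)^j * int (m choose j))) * F b m * (E ^ (m - j) * Y j))"
    unfolding X_Epow Y_def sum_distrib_left by (rule sum.cong[OF refl]) (rule oi_move)
  also have "\<dots> = (\<Sum>j=0..m. (sc ((-1)^(m-j) / fact (m-j)) * F b (m-j) * E ^ (m-j)) * (sc (1 / fact j) * Y j * R (1 - a) j))"
    unfolding atLeast0AtMost[symmetric]
  proof (rule sum.cong[OF refl])
    fix j assume j: "j \<in> {0..m}"
    then have jm: "j \<le> m" by simp
    define Z where "Z = E ^ (m - j) * Y j"
    have s: "sc ((-1)^m / fact m) * of_int ((-1)^j * int (m choose j)) = sc ((-1)^(m-j) / fact (m - j)) * sc (1 / fact j)"
    proof -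
      have "sc ((-1)^m / fact m) * of_int ((-1)^j * int (m choose j)) = sc ((-1)^m / fact m * of_int ((-1)^j * int (m choose j)))"
        by (simp only: sc_mult[OF sc] sc_of_int[OF sc])
      also have "\<dots> = sc ((-1)^(m-j) / fact (m - j) * (1 / fact j))"
        by (simp only: scal2[OF sc jm])
      also have "\<dots> = sc ((-1)^(m-j) / fact (m - j)) * sc (1 / fact j)"
        by (simp only: sc_mult[OF sc])
      finally show ?thesis .
    qed
    have eZ: "H*Z - Z*H = sc (of_nat (m - j) + (\<mu> + of_nat j)) * Z"
      unfolding Z_def Y_def by (rule eig_prod[OF sc eig_Epow[OF sc HE] eig_ad[OF sc HE HX]])
    have ZR: "Z * R (1 - a) j = R (1 - a - (of_nat (m - j) + (\<mu> + of_nat j))) j * Z"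
      unfolding R_def by (rule rising_shift[OF sc eig_shift[OF sc eZ]])
    have c: "1 - a - (of_nat (m - j) + (\<mu> + of_nat j)) = b - of_nat (m - j + j) + 1"
      using jm by (simp add: b_def of_nat_diff algebra_simps)
    have Fm: "F b m = F b (m - j) * R (b - of_nat (m - j + j) + 1) j"
      using falling_split[OF sc, of H b "m - j" j] jm by (simp add: F_def R_def)
    have "(sc ((-1)^(m-j) / fact (m-j)) * F b (m-j) * E ^ (m-j)) * (sc (1 / fact j) * Y j * R (1 - a) j)
        = sc ((-1)^(m-j) / fact (m-j)) * sc (1 / fact j) * F b (m-j) * (Z * R (1 - a) j)"
      unfolding Z_def by (simp only: mult.assoc move_sc[OF sc, of _ "1 / fact j"])
    also have "\<dots> = sc ((-1)^(m-j) / fact (m-j)) * sc (1 / fact j) * F b m * Z"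
      unfolding ZR c Fm by (simp add: mult.assoc)
    finally show "(sc ((-1)^m / fact m) * of_int ((-1)^j * int (m choose j))) * F b m * (E ^ (m - j) * Y j)
       = (sc ((-1)^(m-j) / fact (m-j)) * F b (m-j) * E ^ (m-j)) * (sc (1 / fact j) * Y j * R (1 - a) j)"
      unfolding s Z_def by simp
  qed
  also have "\<dots> = (\<Sum>i=0..m. (sc ((-1)^i / fact i) * F b i * E ^ i) * (sc (1 / fact (m - i)) * Y (m - i) * R (1 - a) (m - i)))"
    by (subst sum.atLeastAtMost_rev) (rule sum.cong[OF refl], simp)
  finally have calc: "X * (sc ((-1)^m / fact m) * F (-a) m * E ^ m) = (\<Sum>i=0..m. (sc ((-1)^i / fact i) * F b i * E ^ i) * (sc (1 / fact (m - i)) * Y (m - i) * R (1 - a) (m - i)))" .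
  have L: "fps_nth (fps_const X * user sc H E a) m = X * (sc ((-1)^m / fact m) * F (-a) m * E ^ m)"
    by (simp only: user_def fps_mult_left_const_nth fps_nth_Abs_fps F_def)
  have Rr: "fps_nth (user sc H E (a + \<mu>) * Abs_fps (\<lambda>l. dpow sc E l X * rising sc H (1 - a) l)) m
     = (\<Sum>i=0..m. (sc ((-1)^i / fact i) * F b i * E ^ i) * (sc (1 / fact (m - i)) * Y (m - i) * R (1 - a) (m - i)))"
    by (simp only: fps_mult_nth user_def fps_nth_Abs_fps dpow_def F_def b_def R_def Y_def mult.assoc)
  show "fps_nth (fps_const X * user sc H E a) m = fps_nth (user sc H E (a + \<mu>) * Abs_fps (\<lambda>l. dpow sc E l X * rising sc H (1 - a) l)) m"
    by (simp only: L Rr calc)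
qed

end



context fixes sc :: "'f::field_char_0 \<Rightarrow> 'a::ring_1" assumes sc: "central_alg_hom sc"
begin

lemma eig_pow:
  assumes "H*X - X*H = sc \<nu> * X"
  shows "H*X^s - X^s*H = sc (of_nat s * \<nu>) * X^s"
proof (induction s)
  case 0 then show ?case by (simp add: sc_zero[OF sc])
next
  case (Suc s)
  have "H*(X*X^s) - (X*X^s)*H = sc (\<nu> + of_nat s * \<nu>) * (X*X^s)" by (rule eig_prod[OF sc assms Suc])
  moreover have "\<nu> + of_nat s * \<nu> = of_nat (Suc s) * \<nu>" by (simp add: algebra_simps)
  ultimately show ?case by (simp only: power_Suc)
qed

lemma brk_h:
  assumes K: "K_rep n sc \<rho>" and k1: "1 \<le> k" and kn: "k \<le> n" and b: "\<beta> \<in> Zvec n"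
  shows "\<rho> (\<lambda>j. eps (int k) j + eps (- int k) j) * \<rho> \<beta> - \<rho> \<beta> * \<rho> (\<lambda>j. eps (int k) j + eps (- int k) j)
     = sc (of_int (\<beta> (int k) - \<beta> (- int k))) * \<rho> \<beta>"
proof -
  define hv where "hv = (\<lambda>j. eps (int k) j + eps (- int k) j)"
  have hvZ: "hv \<in> Zvec n" using kn by (auto simp: Zvec_def hv_def eps_def)
  have hvi: "hv (int i) = (if i = k then 1 else 0)" if "1 \<le> i" for i using that k1 by (auto simp: hv_def eps_def)
  have hvmi: "hv (- int i) = (if i = k then 1 else 0)" if "1 \<le> i" for i using that k1 by (auto simp: hv_def eps_def)
  have hv0: "hv 0 = 0" using k1 by (simp add: hv_def eps_def)
  have w: "wK n hv = 0"
  proof -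
    have "(\<Sum>i=1..n. hv (int i) + hv (- int i)) = (\<Sum>i=1..n. if i = k then 2 else 0)"
      by (rule sum.cong[OF refl]) (simp add: hvi hvmi)
    also have "\<dots> = 2" using k1 kn by simp
    finally show ?thesis by (simp add: wK_def)
  qed
  have "\<rho> hv * \<rho> \<beta> - \<rho> \<beta> * \<rho> hv =
         sc (of_int (wK n hv * \<beta> 0 - wK n \<beta> * hv 0)) * \<rho> (\<lambda>j. hv j + \<beta> j - eps 0 j)
       + (\<Sum>i=1..n. sc (of_int (hv (- int i) * \<beta> (int i) - hv (int i) * \<beta> (- int i)))
                      * \<rho> (\<lambda>j. hv j + \<beta> j - eps (int i) j - eps (- int i) j))"
    using K hvZ b unfolding K_rep_def by blast
  also have "sc (of_int (wK n hv * \<beta> 0 - wK n \<beta> * hv 0)) = 0" by (simp add: w hv0 sc_zero[OF sc])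
  also have "(\<Sum>i=1..n. sc (of_int (hv (- int i) * \<beta> (int i) - hv (int i) * \<beta> (- int i)))
                      * \<rho> (\<lambda>j. hv j + \<beta> j - eps (int i) j - eps (- int i) j))
     = (\<Sum>i=1..n. if i = k then sc (of_int (\<beta> (int k) - \<beta> (- int k))) * \<rho> \<beta> else 0)"
  proof (rule sum.cong[OF refl])
    fix i assume i: "i \<in> {1..n}"
    show "sc (of_int (hv (- int i) * \<beta> (int i) - hv (int i) * \<beta> (- int i)))
                      * \<rho> (\<lambda>j. hv j + \<beta> j - eps (int i) j - eps (- int i) j)
      = (if i = k then sc (of_int (\<beta> (int k) - \<beta> (- int k))) * \<rho> \<beta> else 0)"
    proof (cases "i = k")
      case True
      have "(\<lambda>j. hv j + \<beta> j - eps (int i) j - eps (- int i) j) = \<beta>"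
        using True by (auto simp: hv_def)
      then show ?thesis using True i hvi hvmi by simp
    next
      case False
      then show ?thesis using i hvi hvmi by (simp add: sc_zero[OF sc])
    qed
  qed
  also have "\<dots> = sc (of_int (\<beta> (int k) - \<beta> (- int k))) * \<rho> \<beta>" using k1 kn by simp
  finally show ?thesis by (simp add: hv_def)
qed

end

theorem lemma3p3:
  fixes n k :: nat and sc :: "'f::field_char_0 \<Rightarrow> 'a::ring_1"
    and \<rho>1 \<rho>2 :: "(int \<Rightarrow> int) \<Rightarrow> 'a"
    and \<alpha> :: "int \<Rightarrow> int" and a :: 'f and s :: nat
  assumes "1 \<le> k" and "k \<le> n"
    and "central_alg_hom sc"
    and "K_rep n sc \<rho>1" and "K_rep n sc \<rho>2"
    and "\<forall>\<beta>\<in>Zvec n. \<forall>\<gamma>\<in>Zvec n. \<rho>1 \<beta> * \<rho>2 \<gamma> = \<rho>2 \<gamma> * \<rho>1 \<beta>"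
    and "\<alpha> \<in> Zvec n" and "1 \<le> s"
  shows
   "(let h1 = \<rho>1 (\<lambda>j. eps (int k) j + eps (- int k) j);
         e1 = \<rho>1 (\<lambda>j. 2 * eps (int k) j + eps (- int k) j);
         e2 = \<rho>2 (\<lambda>j. 2 * eps (int k) j + eps (- int k) j);
         X1 = \<rho>1 \<alpha> ^ s; X2 = \<rho>2 \<alpha> ^ s
     in fps_const X1 * Fser sc h1 e2 a
          = Fser sc h1 e2 (a + of_nat s * of_int (\<alpha> (- int k) - \<alpha> (int k))) * fps_const X1
      \<and> fps_const X1 * user sc h1 e1 a
          = user sc h1 e1 (a + of_nat s * of_int (\<alpha> (int k) - \<alpha> (- int k)))
            * Abs_fps (\<lambda>l. dpow sc e1 l X1 * rising sc h1 (1 - a) l)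
      \<and> fps_const X2 * Fser sc h1 e2 a
          = tsum (\<lambda>l. fps_const ((-1) ^ l) * Fser sc h1 e2 (a + of_nat l)
                        * fps_const (rising sc h1 a l * dpow sc e2 l X2)))"
proof -
  note k1 = assms(1) and kn = assms(2) and sc = assms(3) and K1 = assms(4) and K2 = assms(5)
    and com = assms(6) and aZ = assms(7)
  define hv where "hv = (\<lambda>j. eps (int k) j + eps (- int k) j)"
  define ev where "ev = (\<lambda>j. 2 * eps (int k) j + eps (- int k) j)"
  define h1 where "h1 = \<rho>1 hv"
  define e1 where "e1 = \<rho>1 ev"
  define e2 where "e2 = \<rho>2 ev"
  define X1 where "X1 = \<rho>1 \<alpha> ^ s"
  define X2 where "X2 = \<rho>2 \<alpha> ^ s"
  define \<mu> :: 'f where "\<mu> = of_nat s * of_int (\<alpha> (int k) - \<alpha> (- int k))"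
  have hvZ: "hv \<in> Zvec n" using kn by (auto simp: Zvec_def hv_def eps_def)
  have evZ: "ev \<in> Zvec n" using kn by (auto simp: Zvec_def ev_def eps_def)
  have hX: "h1 * \<rho>1 \<alpha> - \<rho>1 \<alpha> * h1 = sc (of_int (\<alpha> (int k) - \<alpha> (- int k))) * \<rho>1 \<alpha>"
    unfolding h1_def hv_def by (rule brk_h[OF sc K1 k1 kn aZ])
  have hX1: "h1 * X1 - X1 * h1 = sc \<mu> * X1"
    unfolding X1_def \<mu>_def by (rule eig_pow[OF sc hX])
  have hE: "h1 * e1 - e1 * h1 = e1"
  proof -
    have "h1 * e1 - e1 * h1 = sc (of_int (ev (int k) - ev (- int k))) * e1"
      unfolding h1_def e1_def hv_def by (rule brk_h[OF sc K1 k1 kn evZ])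
    moreover have "ev (int k) - ev (- int k) = 1" using k1 by (simp add: ev_def eps_def)
    ultimately show ?thesis by (simp add: sc_one[OF sc])
  qed
  have X1e2: "X1 * e2 = e2 * X1"
    unfolding X1_def e2_def using com aZ evZ by (metis power_commuting_commutes)
  have h1e2: "h1 * e2 = e2 * h1" unfolding h1_def e2_def using com hvZ evZ by blast
  have X2h1: "X2 * h1 = h1 * X2"
    unfolding X2_def h1_def using com aZ hvZ by (metis power_commuting_commutes)
  have P1: "fps_const X1 * Fser sc h1 e2 a = Fser sc h1 e2 (a - \<mu>) * fps_const X1"
    by (rule part1[OF sc X1e2 eig_shift[OF sc hX1]])
  have a1: "a - \<mu> = a + of_nat s * of_int (\<alpha> (- int k) - \<alpha> (int k))"
    by (simp add: \<mu>_def algebra_simps)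
  have P2: "fps_const X1 * user sc h1 e1 a = user sc h1 e1 (a + \<mu>) * Abs_fps (\<lambda>l. dpow sc e1 l X1 * rising sc h1 (1 - a) l)"
    by (rule part2[OF sc hE hX1])
  have P3: "fps_const X2 * Fser sc h1 e2 a = tsum (\<lambda>l. fps_const ((-1)^l) * Fser sc h1 e2 (a + of_nat l) * fps_const (rising sc h1 a l * dpow sc e2 l X2))"
    by (rule part3[OF sc h1e2 X2h1])
  show ?thesis
    unfolding Let_def using P1[unfolded a1] P2 P3
    unfolding h1_def e1_def e2_def X1_def X2_def hv_def ev_def \<mu>_def by blast
qed



end
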